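(* Let $f\in L^2(\Omega)$ and let $p_h\in E_h(\Omega)$ satisfy $a_h(p_h,w_h)=(f,w_h)_{L^2(\Omega)}$ for all $w_h\in E_h(\Omega)$. Let $\mathbf u_h$ be the function in the lowest-order Raviart–Thomas space on $\mathcal T_h$ whose degrees of freedom are $$\mathbf u_h\cdot\mathbf n_e:=\frac1{|e|}\int_e\Big(-\{\beta\nabla p_h\cdot\mathbf n_e\}+\frac{\sigma(\beta)}{|e|}[p_h]\cdot\mathbf n_e\Big)\,ds,\qquad e\in\mathcal E_h.$$ Then $\mathbf u_h$ is locally and globally conservative: $$\int_{\partial T}\mathbf u_h\cdot\mathbf n\,ds=\int_T f\,dx\quad\forall T\in\mathcal T_h,\qquad \int_{\partial\Omega}\mathbf u_h\cdot\mathbf n\,ds=\int_\Omega f\,dx,$$ where $\mathbf n$ denotes the unit outward normal to $\partial T$, respectively $\partial\Omega$.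
   Context: Let $\Omega\subset\mathbb R^2$ be a convex polygonal domain, $\Omega=\Omega_1\cup\Gamma\cup\Omega_2$ with $\Omega_1,\Omega_2$ (also written $\Omega^-,\Omega^+$) disjoint open subdomains separated by a $C^2$ interface curve $\Gamma$; for $D\subset\Omega$ put $D_i=D\cap\Omega_i$. For $m=1,2$, $\widetilde H^m(D)=\{u\in H^{m-1}(D):u|_{D_i}\in H^m(D_i),\,i=1,2\}$. The coefficient $\beta$ satisfies $\beta|_{\Omega_i}\in C^1(\Omega_i)$ and $0<\underline\beta<\beta<\overline\beta$. Mesh: $\mathcal T_h$ is a regular triangulation of $\Omega$ of mesh size $h$, not necessarily aligned with $\Gamma$; triangles cut by $\Gamma$ are interface elements. $\mathcal E_h=\mathcal E_h^o\cup\mathcal E_h^\partial$ are the interior and boundary edges, $|e|$ the length of $e$, and each edge carries a fixed unit normal $\mathbf n_e$. For an interior edge $e=\partial T^+\cap\partial T^-$ with outward unit normals $\mathbf n^\pm$ and restrictions $\zeta^\pm,\boldsymbol\tau^\pm$ to $T^\pm$: $\{\zeta\}=\tfrac12(\zeta^++\zeta^-)$, $\{\boldsymbol\tau\}=\tfrac12(\boldsymbol\tau^++\boldsymbol\tau^-)$, $[\zeta]=\zeta^+\mathbf n^++\zeta^-\mathbf n^-$, $[\boldsymbol\tau]=\boldsymbol\tau^+\cdot\mathbf n^++\boldsymbol\tau^-\cdot\mathbf n^-$; on a boundary edge $\{\zeta\}=\zeta$, $\{\boldsymbol\tau\}=\boldsymbol\tau$, $[\zeta]=\zeta\mathbf n$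 with $\mathbf n$ the outward normal. IFEM space: on a non-interface triangle $S_h(T)=\mathcal P^1(T)$. An interface triangle $T$ with vertices $A_1,A_2,A_3$ is divided by the interface (represented in $T$ by the segment joining the two points where $\Gamma$ crosses $\partial T$) into $T^+\subset\Omega^+$, $T^-\subset\Omega^-$, and $\widehat S_h(T)=\mathrm{span}\{\hat\lambda_1,\hat\lambda_2,\hat\lambda_3\}$, where $\hat\lambda_j$ is the unique function linear on each of $T^\pm$ with $\hat\lambda_j(A_i)=\delta_{ij}$ that is continuous and has continuous $\beta\nabla\hat\lambda_j\cdot\mathbf n_\Gamma$ across the interface ($\mathbf n_\Gamma$ the normal to the interface). $\widehat S_h(\Omega)$ consists of the functions $\phi$ with $\phi|_T\in S_h(T)$ (non-interface $T$) or $\phi|_T\in\widehat S_h(T)$ (interface $T$), single-valued at mesh vertices and vanishing at vertices on $\partial\Omega$. $C_h(\Omega)$ is the space of piecewise constants on $\mathcal T_h$. The EIFEM space is $E_h(\Omega)=\widehat S_h(\Omega)+C_h(\Omega)$, and $H_h(\Omega)=\widetilde H^1(\Omega)+E_h(\Omega)$. Bilinear form: with $Q_e^0(v)=\frac1{|e|}\int_e\{v\}\,ds$, a fixed $\theta\in\{-1,0,1\}$ and a penalty $\sigma(\beta)>0$ chosen on each edge, $a_h(v,w)=\sum_T\int_T\beta\nabla v\cdot\nabla w\,dx-\sum_{e\in\mathcal E_h}\int_e\{\beta\nabla v\}\cdot[w]\,ds+\theta\sum_{e\in\mathcal E_h^o}\int_e\{\beta\nabla w\}\cdot[v]\,ds+\theta\sum_{e\in\mathcal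 E_h^\partial}\int_e\{\beta\nabla w\}\cdot[Q_e^0(v)]\,ds+\sum_{e\in\mathcal E_h^o}\frac1{|e|}\int_e\sigma(\beta)[v]\cdot[w]\,ds+\sum_{e\in\mathcal E_h^\partial}\frac1{|e|}\int_e\sigma(\beta)[Q_e^0(v)]\cdot[Q_e^0(w)]\,ds$ for $v,w\in H_h(\Omega)$. *)

theory Defs
  imports "HOL-Analysis.Analysis"
begin

type_synonym R2 = "real^2"

definition convex_polygonal_domain :: "R2 set \<Rightarrow> bool" where
  "convex_polygonal_domain \<Omega> \<longleftrightarrow> (\<exists>P. polytope P \<and> \<Omega> = interior P) \<and> \<Omega> \<noteq> {}"

text \<open>A triangle is represented by its set of three (non-collinear) vertices;
  the closed triangle itself is its convex hull.\<close>
definition is_triangle :: "R2 set \<Rightarrow> bool" where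
  "is_triangle T \<longleftrightarrow> card T = 3 \<and> \<not> collinear T"

text \<open>Conforming triangulation of the closure of the domain: any two distinct
  closed triangles meet in the convex hull of their common vertices (empty set,
  a common vertex or a common edge).\<close>
definition conforming_triangulation :: "R2 set set \<Rightarrow> R2 set \<Rightarrow> bool" where
  "conforming_triangulation \<T> \<Omega> \<longleftrightarrow>
     finite \<T> \<and> (\<forall>T\<in>\<T>. is_triangle T) \<and>
     \<Union>((\<lambda>T. convex hull T) ` \<T>) = closure \<Omega> \<and>
     (\<forall>T\<in>\<T>. \<forall>T'\<in>\<T>. T \<noteq> T' \<longrightarrow> convex hull T \<inter> convex hull T' = convex hull (T \<inter> T'))"

text \<open>Edges are represented by their two-element vertex sets; the closed edge is the convex hull.\<close>
definition edges_of :: "R2 set \<Rightarrow> R2 set set" where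
  "edges_of T = {e. e \<subseteq> T \<and> card e = 2}"

definition mesh_edges :: "R2 set set \<Rightarrow> R2 set set" where
  "mesh_edges \<T> = {e. \<exists>T\<in>\<T>. e \<subseteq> T \<and> card e = 2}"

definition nbrs :: "R2 set set \<Rightarrow> R2 set \<Rightarrow> R2 set set" where
  "nbrs \<T> e = {T\<in>\<T>. e \<subseteq> T}"

definition int_edges :: "R2 set set \<Rightarrow> R2 set set" where
  "int_edges \<T> = {e\<in>mesh_edges \<T>. card (nbrs \<T> e) = 2}"

definition bdry_edges :: "R2 set set \<Rightarrow> R2 set set" where
  "bdry_edges \<T> = {e\<in>mesh_edges \<T>. card (nbrs \<T> e) = 1}"

definition ep1 :: "R2 set \<Rightarrow> R2" where "ep1 e = (SOME A. A \<in> e)"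
definition ep2 :: "R2 set \<Rightarrow> R2" where "ep2 e = (SOME B. B \<in> e \<and> B \<noteq> ep1 e)"

definition elen :: "R2 set \<Rightarrow> real" where
  "elen e = dist (ep1 e) (ep2 e)"

definition edge_int :: "R2 set \<Rightarrow> (R2 \<Rightarrow> real) \<Rightarrow> real" where
  "edge_int e g = elen e * integral {0..1} (\<lambda>t. g ((1 - t) *\<^sub>R ep1 e + t *\<^sub>R ep2 e))"

definition outn :: "R2 set \<Rightarrow> R2 set \<Rightarrow> R2" where
  "outn T e = (let A = ep1 e; B = ep2 e; C = (SOME C. C \<in> T - e); d = B - A;
                   n0 = (vector [- (d $ 2), d $ 1] :: R2)
               in if inner n0 (C - A) < 0 then (1 / norm n0) *\<^sub>R n0 else (- 1 / norm n0) *\<^sub>R n0)"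

text \<open>Gamma is (the part inside Omega of) a simple C^2 regular curve, open or closed.\<close>
definition C2_curve :: "R2 set \<Rightarrow> R2 set \<Rightarrow> bool" where
  "C2_curve \<Omega> \<Gamma> \<longleftrightarrow> (\<exists>(\<gamma>::real \<Rightarrow> R2) \<gamma>' \<gamma>'' a b. a < b \<and>
     (\<forall>t\<in>{a..b}. (\<gamma> has_vector_derivative \<gamma>' t) (at t within {a..b}) \<and>
                 (\<gamma>' has_vector_derivative \<gamma>'' t) (at t within {a..b}) \<and> \<gamma>' t \<noteq> 0) \<and>
     continuous_on {a..b} \<gamma>'' \<and>
     (inj_on \<gamma> {a..b} \<or> (\<gamma> a = \<gamma> b \<and> \<gamma>' a = \<gamma>' b \<and> \<gamma>'' a = \<gamma>'' b \<and> inj_on \<gamma> {a..<b})) \<and>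
     \<Gamma> = \<gamma> ` {a..b} \<inter> \<Omega>)"

definition interface_elem :: "R2 set \<Rightarrow> R2 set \<Rightarrow> bool" where
  "interface_elem \<Gamma> T \<longleftrightarrow> \<Gamma> \<inter> interior (convex hull T) \<noteq> {}"

text \<open>Gradient (zero convention at points of non-differentiability, a null set).\<close>
definition grad :: "(R2 \<Rightarrow> real) \<Rightarrow> R2 \<Rightarrow> R2" where
  "grad g x = (if g differentiable (at x) then (\<chi> i. frechet_derivative g (at x) (axis i 1)) else 0)"

definition avg_on :: "R2 set \<Rightarrow> (R2 \<Rightarrow> real) \<Rightarrow> real" where
  "avg_on S g = (LINT x:S|lebesgue. g x) / measure lebesgue S"

text \<open>Local IFE space on an interface triangle T (vertex set): functions that are
  linear on each side of the straight segment DE joining the two points where Gamma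
  meets the boundary of T, continuous across DE, with continuous flux
  beta grad phi . n_Gamma across DE, where beta on T+ (resp. T-) is the mean of beta over
  T cap Omega2 (resp. T cap Omega1).  Elements are stored as the natural
  piecewise-affine extension to the whole plane.  The affine function l x = nv . x + d
  vanishes on DE and is nonnegative on the T+ (Omega2 = Omega+) side.\<close>
definition IFE_local :: "R2 set \<Rightarrow> R2 set \<Rightarrow> R2 set \<Rightarrow> (R2 \<Rightarrow> real) \<Rightarrow> R2 set \<Rightarrow> (R2 \<Rightarrow> real) set" where
  "IFE_local \<Omega>1 \<Omega>2 \<Gamma> \<beta> T = {\<phi>. \<exists>D E nv d ap bp am bm.
      D \<noteq> E \<and> D \<in> frontier (convex hull T) \<inter> \<Gamma> \<and> E \<in> frontier (convex hull T) \<inter> \<Gamma> \<and>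
      nv \<noteq> 0 \<and> inner nv D + d = 0 \<and> inner nv E + d = 0 \<and>
      (\<forall>a\<in>T. a \<in> closure \<Omega>2 - closure \<Omega>1 \<longrightarrow> 0 \<le> inner nv a + d) \<and>
      (\<forall>a\<in>T. a \<in> closure \<Omega>1 - closure \<Omega>2 \<longrightarrow> inner nv a + d \<le> 0) \<and>
      (\<forall>x. \<phi> x = (if 0 \<le> inner nv x + d then inner ap x + bp else inner am x + bm)) \<and>
      inner ap D + bp = inner am D + bm \<and> inner ap E + bp = inner am E + bm \<and>
      avg_on (convex hull T \<inter> \<Omega>2) \<beta> * inner ap nv = avg_on (convex hull T \<inter> \<Omega>1) \<beta> * inner am nv}"

definition S_loc :: "R2 set \<Rightarrow> R2 set \<Rightarrow> R2 set \<Rightarrow> (R2 \<Rightarrow> real) \<Rightarrow> R2 set \<Rightarrow> (R2 \<Rightarrow> real) set" where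
  "S_loc \<Omega>1 \<Omega>2 \<Gamma> \<beta> T =
     (if interface_elem \<Gamma> T then IFE_local \<Omega>1 \<Omega>2 \<Gamma> \<beta> T
      else {\<phi>. \<exists>a b. \<forall>x. \<phi> x = inner a x + b})"

text \<open>Mesh functions are represented elementwise: v T is the (polynomial-type) function on triangle T.\<close>
definition S_hat :: "R2 set set \<Rightarrow> R2 set \<Rightarrow> R2 set \<Rightarrow> R2 set \<Rightarrow> R2 set \<Rightarrow> (R2 \<Rightarrow> real)
                     \<Rightarrow> (R2 set \<Rightarrow> R2 \<Rightarrow> real) set" where
  "S_hat \<T> \<Omega> \<Omega>1 \<Omega>2 \<Gamma> \<beta> = {s.
     (\<forall>T\<in>\<T>. s T \<in> S_loc \<Omega>1 \<Omega>2 \<Gamma> \<beta> T) \<and>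
     (\<forall>T\<in>\<T>. \<forall>T'\<in>\<T>. \<forall>a\<in>T \<inter> T'. s T a = s T' a) \<and>
     (\<forall>T\<in>\<T>. \<forall>a\<in>T. a \<in> frontier \<Omega> \<longrightarrow> s T a = 0)}"

definition C_h :: "R2 set set \<Rightarrow> (R2 set \<Rightarrow> R2 \<Rightarrow> real) set" where
  "C_h \<T> = {c. \<forall>T\<in>\<T>. \<exists>k. c T = (\<lambda>_. k)}"

definition E_h :: "R2 set set \<Rightarrow> R2 set \<Rightarrow> R2 set \<Rightarrow> R2 set \<Rightarrow> R2 set \<Rightarrow> (R2 \<Rightarrow> real)
                     \<Rightarrow> (R2 set \<Rightarrow> R2 \<Rightarrow> real) set" where
  "E_h \<T> \<Omega> \<Omega>1 \<Omega>2 \<Gamma> \<beta> = {w. \<exists>s\<in>S_hat \<T> \<Omega> \<Omega>1 \<Omega>2 \<Gamma> \<beta>. \<exists>c\<in>C_h \<T>. w = (\<lambda>T x. s T x + c T x)}"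

text \<open>Average of beta grad v on edge e (on a boundary edge: the one-sided value).\<close>
definition avgflux :: "R2 set set \<Rightarrow> (R2 \<Rightarrow> real) \<Rightarrow> (R2 set \<Rightarrow> R2 \<Rightarrow> real) \<Rightarrow> R2 set \<Rightarrow> R2 \<Rightarrow> R2" where
  "avgflux \<T> \<beta> v e x = (1 / real (card (nbrs \<T> e))) *\<^sub>R (\<Sum>T\<in>nbrs \<T> e. (\<beta> x) *\<^sub>R grad (v T) x)"

definition avgval :: "R2 set set \<Rightarrow> (R2 set \<Rightarrow> R2 \<Rightarrow> real) \<Rightarrow> R2 set \<Rightarrow> R2 \<Rightarrow> real" where
  "avgval \<T> v e x = (1 / real (card (nbrs \<T> e))) * (\<Sum>T\<in>nbrs \<T> e. v T x)"

text \<open>Jump [v] (a vector) on edge e (on a boundary edge: v n with n the outward normal).\<close>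
definition jump :: "R2 set set \<Rightarrow> (R2 set \<Rightarrow> R2 \<Rightarrow> real) \<Rightarrow> R2 set \<Rightarrow> R2 \<Rightarrow> R2" where
  "jump \<T> v e x = (\<Sum>T\<in>nbrs \<T> e. v T x *\<^sub>R outn T e)"

definition Q0 :: "R2 set set \<Rightarrow> (R2 set \<Rightarrow> R2 \<Rightarrow> real) \<Rightarrow> R2 set \<Rightarrow> real" where
  "Q0 \<T> v e = edge_int e (avgval \<T> v e) / elen e"

definition jumpQ :: "R2 set set \<Rightarrow> (R2 set \<Rightarrow> R2 \<Rightarrow> real) \<Rightarrow> R2 set \<Rightarrow> R2" where
  "jumpQ \<T> v e = (\<Sum>T\<in>nbrs \<T> e. Q0 \<T> v e *\<^sub>R outn T e)"

definition a_h :: "R2 set set \<Rightarrow> (R2 \<Rightarrow> real) \<Rightarrow> (R2 set \<Rightarrow> real) \<Rightarrow> real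
                   \<Rightarrow> (R2 set \<Rightarrow> R2 \<Rightarrow> real) \<Rightarrow> (R2 set \<Rightarrow> R2 \<Rightarrow> real) \<Rightarrow> real" where
  "a_h \<T> \<beta> \<sigma> \<theta> v w =
     (\<Sum>T\<in>\<T>. LINT x:convex hull T|lebesgue. \<beta> x * inner (grad (v T) x) (grad (w T) x))
   - (\<Sum>e\<in>mesh_edges \<T>. edge_int e (\<lambda>x. inner (avgflux \<T> \<beta> v e x) (jump \<T> w e x)))
   + \<theta> * (\<Sum>e\<in>int_edges \<T>. edge_int e (\<lambda>x. inner (avgflux \<T> \<beta> w e x) (jump \<T> v e x)))
   + \<theta> * (\<Sum>e\<in>bdry_edges \<T>. edge_int e (\<lambda>x. inner (avgflux \<T> \<beta> w e x) (jumpQ \<T> v e)))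
   + (\<Sum>e\<in>int_edges \<T>. (1 / elen e) * edge_int e (\<lambda>x. \<sigma> e * inner (jump \<T> v e x) (jump \<T> w e x)))
   + (\<Sum>e\<in>bdry_edges \<T>. (1 / elen e) * edge_int e (\<lambda>x. \<sigma> e * inner (jumpQ \<T> v e) (jumpQ \<T> w e)))"

definition l2ip :: "R2 set set \<Rightarrow> (R2 \<Rightarrow> real) \<Rightarrow> (R2 set \<Rightarrow> R2 \<Rightarrow> real) \<Rightarrow> real" where
  "l2ip \<T> f w = (\<Sum>T\<in>\<T>. LINT x:convex hull T|lebesgue. f x * w T x)"

definition RT0 :: "R2 set set \<Rightarrow> (R2 set \<Rightarrow> R2 \<Rightarrow> R2) set" where
  "RT0 \<T> = {u. (\<forall>T\<in>\<T>. \<exists>a b. \<forall>x. u T x = a + b *\<^sub>R x) \<and>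
     (\<forall>e\<in>int_edges \<T>. \<forall>T\<in>nbrs \<T> e. \<forall>T'\<in>nbrs \<T> e. T \<noteq> T' \<longrightarrow>
        (\<forall>x\<in>convex hull e. inner (u T x) (outn T e) + inner (u T' x) (outn T' e) = 0))}"

definition rt_dof :: "R2 set set \<Rightarrow> (R2 \<Rightarrow> real) \<Rightarrow> (R2 set \<Rightarrow> real) \<Rightarrow> (R2 set \<Rightarrow> R2)
                      \<Rightarrow> (R2 set \<Rightarrow> R2 \<Rightarrow> real) \<Rightarrow> R2 set \<Rightarrow> real" where
  "rt_dof \<T> \<beta> \<sigma> ne p e = (1 / elen e) *
     edge_int e (\<lambda>x. - inner (avgflux \<T> \<beta> p e x) (ne e) + (\<sigma> e / elen e) * inner (jump \<T> p e x) (ne e))"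

end

theory Submission
  imports Defs
begin

lemma inner2: "inner (x::R2) y = x$1*y$1 + x$2*y$2"
  by (simp add: inner_vec_def sum_2)

lemma vec2_eq: "(x::R2) = y \<longleftrightarrow> x$1 = y$1 \<and> x$2 = y$2"
  by (simp add: vec_eq_iff forall_2)

lemma perp2_cross:
  fixes n v w :: R2
  assumes "n \<noteq> 0" "inner v n = 0" "inner w n = 0"
  shows "v$1*w$2 = v$2*w$1"
proof -
  have a: "v$1*n$1 + v$2*n$2 = 0" "w$1*n$1 + w$2*n$2 = 0" using assms by (simp_all add: inner2)
  have b: "v$1*n$1 = - v$2*n$2" "w$1*n$1 = - w$2*n$2" "v$2*n$2 = - v$1*n$1" "w$2*n$2 = - w$1*n$1" using a by linarith+
  have "n$1 \<noteq> 0 \<or> n$2 \<noteq> 0" using assms(1) by (auto simp: vec2_eq)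
  moreover have "n$1 * (v$1*w$2 - v$2*w$1) = 0"
  proof -
    have "n$1 * (v$1*w$2 - v$2*w$1) = w$2*(v$1*n$1) - v$2*(w$1*n$1)" by (simp add: algebra_simps)
    also have "\<dots> = w$2*(- v$2*n$2) - v$2*(- w$2*n$2)" by (simp only: b)
    finally show ?thesis by (simp add: algebra_simps)
  qed
  moreover have "n$2 * (v$1*w$2 - v$2*w$1) = 0"
  proof -
    have "n$2 * (v$1*w$2 - v$2*w$1) = v$1*(w$2*n$2) - w$1*(v$2*n$2)" by (simp add: algebra_simps)
    also have "\<dots> = v$1*(- w$1*n$1) - w$1*(- v$1*n$1)" by (simp only: b)
    finally show ?thesis by (simp add: algebra_simps)
  qed
  ultimately show ?thesis by auto
qed

lemma perp2_unit:
  fixes n v w :: R2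
  assumes "n \<noteq> 0" "inner v n = 0" "inner w n = 0" "norm w = 1"
  shows "inner v w *\<^sub>R w = v"
proof -
  have c: "v$1*w$2 = v$2*w$1" using perp2_cross assms by blast
  have w: "w$1*w$1 + w$2*w$2 = 1" using assms(4)
    by (metis inner2 norm_eq_1)
  have "(v$1*w$1 + v$2*w$2)*w$1 = v$1" 
  proof -
    have "(v$1*w$1 + v$2*w$2)*w$1 = v$1*(w$1*w$1) + (v$2*w$1)*w$2" by (simp add: algebra_simps)
    also have "\<dots> = v$1*(w$1*w$1 + w$2*w$2)" using c by (simp add: algebra_simps)
    finally show ?thesis using w by simp
  qed
  moreover have "(v$1*w$1 + v$2*w$2)*w$2 = v$2" 
  proof -
    have "(v$1*w$1 + v$2*w$2)*w$2 = (v$1*w$2)*w$1 + v$2*(w$2*w$2)" by (simp add: algebra_simps)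
    also have "\<dots> = v$2*(w$1*w$1 + w$2*w$2)" using c by (simp add: algebra_simps)
    finally show ?thesis using w by simp
  qed
  ultimately show ?thesis by (simp add: vec2_eq inner2)
qed

lemma perp2_line:
  fixes n v w :: R2
  assumes "n \<noteq> 0" "inner v n = 0" "inner w n = 0" "w \<noteq> 0"
  shows "\<exists>\<mu>. v = \<mu> *\<^sub>R w"
proof -
  let ?u = "(1/norm w) *\<^sub>R w"
  have "inner ?u n = 0" using assms by simp
  moreover have "norm ?u = 1" using assms by simp
  ultimately have "inner v ?u *\<^sub>R ?u = v" using perp2_unit assms by blast
  then show ?thesis by (metis scaleR_scaleR)
qed

lemma ep_basic:
  assumes "card e = 2"
  shows "ep1 e \<in> e" "ep2 e \<in> e" "ep1 e \<noteq> ep2 e" "e = {ep1 e, ep2 e}"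
proof -
  obtain a b where ab: "e = {a,b}" "a \<noteq> b" using assms card_2_iff by metis
  show 1: "ep1 e \<in> e" unfolding ep1_def using ab by (metis insertI1 someI_ex)
  have "\<exists>B. B \<in> e \<and> B \<noteq> ep1 e" using ab 1 by auto
  then show 2: "ep2 e \<in> e" and 3: "ep1 e \<noteq> ep2 e" unfolding ep2_def by (metis (mono_tags, lifting) someI_ex)+
  show "e = {ep1 e, ep2 e}" using 1 2 3 ab by auto
qed

lemma elen_pos: "card e = 2 \<Longrightarrow> elen e > 0"
  using ep_basic[of e] by (simp add: elen_def)

definition cr :: "R2 \<Rightarrow> R2 \<Rightarrow> real" where "cr u v = (u $ 1) * (v $ 2) - (u $ 2) * (v $ 1)"

definition perpv :: "R2 \<Rightarrow> R2" where "perpv d = vector [- (d $ 2), d $ 1]"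

lemma perpv_inner: "inner (perpv d) x = cr d x"
  by (simp add: perpv_def inner2 cr_def algebra_simps)

lemma perpv_nz: "d \<noteq> 0 \<Longrightarrow> perpv d \<noteq> 0"
  by (auto simp: perpv_def vec2_eq)

lemma norm_perpv: "norm (perpv d) = norm d"
  by (simp add: norm_eq_sqrt_inner inner2 perpv_def algebra_simps)

lemma cr_self[simp]: "cr d d = 0" by (simp add: cr_def)

lemma cr_lin: "cr d (a *\<^sub>R x + b *\<^sub>R y) = a * cr d x + b * cr d y"
  by (simp add: cr_def algebra_simps)

lemma cr_diff: "cr d (x - y) = cr d x - cr d y"
  by (simp add: cr_def algebra_simps)

lemma cr_zero_line:
  assumes "d \<noteq> 0" "cr d v = 0" shows "\<exists>\<mu>. v = \<mu> *\<^sub>R d"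
proof -
  have "inner v (perpv d) = 0" "inner d (perpv d) = 0"
    using assms by (metis inner_commute perpv_inner cr_self)+
  then show ?thesis using perp2_line[OF perpv_nz[OF assms(1)]] assms(1) by blast
qed

lemma outn_props:
  assumes "card e = 2"
  shows "norm (outn T e) = 1" "inner (outn T e) (ep2 e - ep1 e) = 0"
proof -
  let ?d = "ep2 e - ep1 e"
  have d: "?d \<noteq> 0" using ep_basic[OF assms] by simp
  have o: "outn T e = (1 / norm (perpv ?d)) *\<^sub>R perpv ?d \<or> outn T e = (- 1 / norm (perpv ?d)) *\<^sub>R perpv ?d"
    unfolding outn_def Let_def perpv_def by auto
  have n: "norm (perpv ?d) \<noteq> 0" using perpv_nz[OF d] by simp
  show "norm (outn T e) = 1" using o n by auto
  have "inner (perpv ?d) ?d = 0" by (simp add: perpv_inner)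
  then show "inner (outn T e) (ep2 e - ep1 e) = 0" using o by auto
qed

lemma outn_ne:
  assumes "card e = 2" "norm (ne e) = 1" "inner (ne e) (ep2 e - ep1 e) = 0"
  shows "inner (outn T e) (ne e) *\<^sub>R ne e = outn T e"
  using perp2_unit[of "ep2 e - ep1 e" "outn T e" "ne e"] outn_props[OF assms(1)] assms ep_basic[OF assms(1)]
  by auto

lemma tri_split:
  assumes "is_triangle T" "e \<subseteq> T" "card e = 2"
  shows "\<exists>C. T = insert C e \<and> C \<notin> e \<and> cr (ep2 e - ep1 e) (C - ep1 e) \<noteq> 0"
proof -
  have cT: "card T = 3" "\<not> collinear T" using assms(1) is_triangle_def by auto
  have fin: "finite T" using cT by (metis card.infinite zero_neq_numeral)
  have "card (T - e) = 1" using cT assms by (simp add: card_Diff_subset finite_subset[OF assms(2) fin])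
  then obtain C where C: "T - e = {C}" using card_1_singletonE by blast
  then have TC: "T = insert C e" "C \<notin> e" using assms(2) by auto
  let ?A = "ep1 e" and ?B = "ep2 e"
  have eAB: "e = {?A, ?B}" "?A \<noteq> ?B" using ep_basic[OF assms(3)] by auto
  have "cr (?B - ?A) (C - ?A) \<noteq> 0"
  proof
    assume "cr (?B - ?A) (C - ?A) = 0"
    then obtain \<mu> where "C - ?A = \<mu> *\<^sub>R (?B - ?A)" using cr_zero_line eAB by (metis right_minus_eq)
    then have "C = (1 - \<mu>) *\<^sub>R ?A + \<mu> *\<^sub>R ?B" by (simp add: algebra_simps)
    then have "C \<in> affine hull {?A, ?B}" unfolding affine_hull_2 by force
    then have "collinear {?A, ?B, C}" by (rule affine_hull_3_imp_collinear)
    moreover have "T = {?A, ?B, C}" using TC eAB by auto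
    ultimately show False using cT by simp
  qed
  then show ?thesis using TC by blast
qed

lemma same_side_point:
  fixes A B C1 C2 :: R2
  assumes AB: "A \<noteq> B" and pos: "cr (B - A) (C1 - A) * cr (B - A) (C2 - A) > 0"
  shows "\<exists>x. x \<in> convex hull {A,B,C1} \<and> x \<in> convex hull {A,B,C2} \<and> x \<notin> convex hull {A,B}"
proof -
  let ?d = "B - A"
  define k1 where "k1 = cr ?d (C1 - A)"
  define k2 where "k2 = cr ?d (C2 - A)"
  have k2: "k2 \<noteq> 0" using pos k2_def by auto
  have k1: "k1 \<noteq> 0" using pos k1_def by auto
  define r where "r = k1 / k2"
  have r: "r > 0" using pos unfolding r_def k1_def k2_def
    by (simp add: zero_less_divide_iff zero_less_mult_iff)
  have "cr ?d ((C1 - A) - r *\<^sub>R (C2 - A)) = 0"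
  proof -
    have sc: "cr ?d (r *\<^sub>R (C2 - A)) = r * k2" unfolding k2_def by (simp add: cr_def algebra_simps)
    have "cr ?d ((C1 - A) - r *\<^sub>R (C2 - A)) = k1 - r * k2" by (simp only: cr_diff[of _ "C1 - A"] sc k1_def)
    then show ?thesis using k2 by (simp add: r_def)
  qed
  then obtain \<nu> where nu: "(C1 - A) - r *\<^sub>R (C2 - A) = \<nu> *\<^sub>R ?d" using cr_zero_line AB by (metis right_minus_eq)
  define l where "l = 1 / (2 * (1 + r + \<bar>\<nu>\<bar>))"
  have l0: "l > 0" using r by (simp add: l_def add_pos_nonneg)
  have lb: "l * (1 + r + \<bar>\<nu>\<bar>) = 1/2" using r unfolding l_def
    by (simp add: field_simps add_pos_nonneg)
  define x where "x = ((1 - l)/2) *\<^sub>R A + ((1 - l)/2) *\<^sub>R B + l *\<^sub>R C1"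
  have l1: "l \<le> 1/2" using lb l0 r by (smt (verit) mult_le_cancel_left1)
  have x1: "x \<in> convex hull {A,B,C1}" unfolding convex_hull_3 x_def
    using l0 l1 by (rule_tac CollectI, rule_tac x="(1 - l)/2" in exI, rule_tac x="(1 - l)/2" in exI, rule_tac x=l in exI) auto
  have C1: "C1 = A + r *\<^sub>R (C2 - A) + \<nu> *\<^sub>R (B - A)" using nu by (simp add: algebra_simps)
  define a where "a = (1 + l)/2 - l * r - l * \<nu>"
  define b where "b = (1 - l)/2 + l * \<nu>"
  have xe: "x = a *\<^sub>R A + b *\<^sub>R B + (l * r) *\<^sub>R C2"
    unfolding x_def C1 a_def b_def by (simp add: vec2_eq; simp add: algebra_simps add_divide_distrib diff_divide_distrib)
  have e1: "l + l*r + l*\<bar>\<nu>\<bar> = 1/2" using lb by (simp add: algebra_simps)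
  have e2: "l * \<nu> \<le> l * \<bar>\<nu>\<bar>" "- (l * \<bar>\<nu>\<bar>) \<le> l * \<nu>"
  proof -
    show "l * \<nu> \<le> l * \<bar>\<nu>\<bar>" using l0 by (intro mult_left_mono) auto
    have "l * (- \<bar>\<nu>\<bar>) \<le> l * \<nu>" using l0 by (intro mult_left_mono) auto
    then show "- (l * \<bar>\<nu>\<bar>) \<le> l * \<nu>" by simp
  qed
  have e3: "l * r \<ge> 0" using l0 r by simp
  have a0: "a \<ge> 0" unfolding a_def using e1 e2 e3 l0 by argo
  have b0: "b \<ge> 0" unfolding b_def using e1 e2 e3 l0 by argo
  have x2: "x \<in> convex hull {A,B,C2}"
  proof -
    have "a + b + l * r = 1" unfolding a_def b_def by argo
    then show ?thesis unfolding convex_hull_3 xe using a0 b0 l0 r by (rule_tac CollectI, rule_tac x=a in exI, rule_tac x=b in exI, rule_tac x="l*r" in exI) auto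
  qed
  have "x \<notin> convex hull {A,B}"
  proof
    assume "x \<in> convex hull {A,B}"
    then obtain t where t: "x = (1 - t) *\<^sub>R A + t *\<^sub>R B"
      unfolding segment_convex_hull[symmetric] closed_segment_def by auto
    have "cr ?d (x - A) = 0" unfolding t by (simp add: cr_def algebra_simps)
    moreover have "cr ?d (x - A) = l * k1"
    proof -
      have "x - A = ((1-l)/2) *\<^sub>R (B - A) + l *\<^sub>R (C1 - A)" unfolding x_def by (simp add: vec2_eq field_simps)
      then show ?thesis unfolding k1_def by (simp add: cr_lin)
    qed
    ultimately show False using l0 k1 by simp
  qed
  then show ?thesis using x1 x2 by blast
qed

lemma opp_side:
  assumes conf: "conforming_triangulation \<T> \<Omega>" and e2: "card e = 2"
    and T1: "T1 \<in> \<T>" "e \<subseteq> T1" "T1 = insert C1 e" "C1 \<notin> e"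
    and T2: "T2 \<in> \<T>" "e \<subseteq> T2" "T2 = insert C2 e" "C2 \<notin> e"
    and ne: "T1 \<noteq> T2"
    and k1: "cr (ep2 e - ep1 e) (C1 - ep1 e) \<noteq> 0" and k2: "cr (ep2 e - ep1 e) (C2 - ep1 e) \<noteq> 0"
  shows "cr (ep2 e - ep1 e) (C1 - ep1 e) * cr (ep2 e - ep1 e) (C2 - ep1 e) < 0"
proof (rule ccontr)
  let ?A = "ep1 e" and ?B = "ep2 e"
  assume "\<not> ?thesis"
  then have pos: "cr (?B - ?A) (C1 - ?A) * cr (?B - ?A) (C2 - ?A) > 0" using k1 k2
    by (simp add: not_less) (metis linorder_neqE_linordered_idom mult_neg_neg mult_pos_pos mult_neg_pos mult_pos_neg leD)
  have eAB: "e = {?A, ?B}" "?A \<noteq> ?B" using ep_basic[OF e2] by auto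
  obtain x where x: "x \<in> convex hull {?A,?B,C1}" "x \<in> convex hull {?A,?B,C2}" "x \<notin> convex hull {?A,?B}"
    using same_side_point[OF eAB(2) pos] by blast
  have "C1 \<noteq> C2" using T1 T2 ne by auto
  then have "T1 \<inter> T2 = e" using T1 T2 by auto
  then have "convex hull T1 \<inter> convex hull T2 = convex hull e"
    using conf T1 T2 ne unfolding conforming_triangulation_def by auto
  moreover have "convex hull T1 = convex hull {?A,?B,C1}" "convex hull T2 = convex hull {?A,?B,C2}"
    using T1 T2 eAB by (simp_all add: insert_commute)
  ultimately show False using x eAB by auto
qed

lemma nbrs_card:
  assumes conf: "conforming_triangulation \<T> \<Omega>" and e: "e \<in> mesh_edges \<T>"
  shows "card (nbrs \<T> e) = 1 \<or> card (nbrs \<T> e) = 2"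
proof -
  have fin: "finite (nbrs \<T> e)" using conf unfolding conforming_triangulation_def nbrs_def by auto
  obtain T0 where T0: "T0 \<in> \<T>" "e \<subseteq> T0" "card e = 2" using e unfolding mesh_edges_def by auto
  have "nbrs \<T> e \<noteq> {}" using T0 unfolding nbrs_def by auto
  then have c1: "card (nbrs \<T> e) \<ge> 1" using fin by (simp add: Suc_le_eq card_gt_0_iff)
  have "\<not> 3 \<le> card (nbrs \<T> e)"
  proof
    assume "3 \<le> card (nbrs \<T> e)"
    then obtain T1 T2 T3 where Ts: "T1 \<in> nbrs \<T> e" "T2 \<in> nbrs \<T> e" "T3 \<in> nbrs \<T> e"
      "T1 \<noteq> T2" "T1 \<noteq> T3" "T2 \<noteq> T3"
      by (auto simp: numeral_3_eq_3 card_le_Suc_iff)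
    have tri: "\<And>T. T \<in> \<T> \<Longrightarrow> is_triangle T" using conf unfolding conforming_triangulation_def by auto
    let ?k = "\<lambda>C. cr (ep2 e - ep1 e) (C - ep1 e)"
    have ex: "\<And>T. T \<in> nbrs \<T> e \<Longrightarrow> \<exists>C. T = insert C e \<and> C \<notin> e \<and> ?k C \<noteq> 0"
      using tri tri_split T0(3) unfolding nbrs_def by blast
    obtain C1 where C1: "T1 = insert C1 e" "C1 \<notin> e" "?k C1 \<noteq> 0" using ex Ts by blast
    obtain C2 where C2: "T2 = insert C2 e" "C2 \<notin> e" "?k C2 \<noteq> 0" using ex Ts by blast
    obtain C3 where C3: "T3 = insert C3 e" "C3 \<notin> e" "?k C3 \<noteq> 0" using ex Ts by blast
    have m: "T1 \<in> \<T>" "e \<subseteq> T1" "T2 \<in> \<T>" "e \<subseteq> T2" "T3 \<in> \<T>" "e \<subseteq> T3" using Ts unfolding nbrs_def by auto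
    have "?k C1 * ?k C2 < 0" by (rule opp_side[OF conf T0(3) m(1,2) C1(1,2) m(3,4) C2(1,2) Ts(4) C1(3) C2(3)])
    moreover have "?k C1 * ?k C3 < 0" by (rule opp_side[OF conf T0(3) m(1,2) C1(1,2) m(5,6) C3(1,2) Ts(5) C1(3) C3(3)])
    moreover have "?k C2 * ?k C3 < 0" by (rule opp_side[OF conf T0(3) m(3,4) C2(1,2) m(5,6) C3(1,2) Ts(6) C2(3) C3(3)])
    ultimately show False by (simp add: mult_less_0_iff) linarith
  qed
  then show ?thesis using c1 by linarith
qed

definition pwf :: "R2 \<Rightarrow> real \<Rightarrow> R2 \<Rightarrow> real \<Rightarrow> R2 \<Rightarrow> real \<Rightarrow> R2 \<Rightarrow> real" where
  "pwf nv d ap bp am bm x = (if 0 \<le> inner nv x + d then inner ap x + bp else inner am x + bm)"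

lemma grad_eqI:
  assumes "(g has_derivative (\<lambda>h. inner a h)) (at x)"
  shows "grad g x = a"
proof -
  have "g differentiable (at x)" using assms differentiable_def by blast
  moreover have "frechet_derivative g (at x) = (\<lambda>h. inner a h)" using frechet_derivative_at[OF assms] by simp
  ultimately show ?thesis unfolding grad_def by (simp add: vec_eq_iff inner_axis)
qed

lemma affine_has_derivative: "((\<lambda>x. inner a x + b) has_derivative (\<lambda>h. inner a h)) (at x within S)"
  by (auto intro!: derivative_eq_intros)

lemma halfplane_unique:
  fixes c :: R2
  assumes x: "inner c x + dd = 0"
    and f1: "(f has_derivative f1) (at x within {y. 0 \<le> inner c y + dd})"
    and f2: "(f has_derivative f2) (at x within {y. 0 \<le> inner c y + dd})"
  shows "f1 = f2"
proof (rule frechet_derivative_unique_within[OF f1 f2])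
  fix i :: R2 and e :: real assume i: "i \<in> Basis" and e: "e > 0"
  show "\<exists>d. 0 < \<bar>d\<bar> \<and> \<bar>d\<bar> < e \<and> x + d *\<^sub>R i \<in> {y. 0 \<le> inner c y + dd}"
  proof (cases "inner c i \<ge> 0")
    case True
    then have "0 \<le> e * inner c i" using e by simp
    then show ?thesis using e x by (rule_tac x="e/2" in exI) (simp add: inner_add_right algebra_simps)
  next
    case False
    then have "0 \<le> - (e * inner c i)" using e by (simp add: mult_pos_neg mult_le_0_iff)
    then show ?thesis using e x by (rule_tac x="-e/2" in exI) (simp add: inner_add_right algebra_simps)
  qed
qed

lemma grad_pwf:
  assumes nv: "nv \<noteq> 0" and line: "\<forall>x. inner nv x + d = 0 \<longrightarrow> inner ap x + bp = inner am x + bm"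
  shows "grad (pwf nv d ap bp am bm) x =
    (if inner nv x + d > 0 then ap else if inner nv x + d < 0 then am else if ap = am then ap else 0)"
proof -
  let ?g = "pwf nv d ap bp am bm"
  let ?Ap = "\<lambda>y. inner ap y + bp" and ?Am = "\<lambda>y. inner am y + bm"
  have cl: "continuous_on UNIV (\<lambda>y. inner nv y + d)" by (intro continuous_intros)
  show ?thesis
  proof (cases "inner nv x + d > 0")
    case True
    have "open {y. inner nv y + d > 0}" using cl by (simp add: open_Collect_less continuous_on_const)
    then have "(?g has_derivative (\<lambda>h. inner ap h)) (at x)"
      by (rule has_derivative_transform_within_open[OF affine_has_derivative, where g="?g"])
        (use True in \<open>auto simp: pwf_def\<close>)
    then show ?thesis using True grad_eqI by simp
  next
    case F1: False
    show ?thesis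
    proof (cases "inner nv x + d < 0")
      case True
      have "open {y. inner nv y + d < 0}" using cl by (simp add: open_Collect_less continuous_on_const)
      then have "(?g has_derivative (\<lambda>h. inner am h)) (at x)"
        by (rule has_derivative_transform_within_open[OF affine_has_derivative, where g="?g"])
          (use True in \<open>auto simp: pwf_def\<close>)
      then show ?thesis using True F1 grad_eqI by simp
    next
      case F2: False
      then have x0: "inner nv x + d = 0" using F1 by simp
      show ?thesis
      proof (cases "ap = am")
        case True
        then have "bp = bm" using line x0 by auto
        then have "?g = ?Ap" using True by (auto simp: pwf_def fun_eq_iff)
        then show ?thesis using True F1 F2 grad_eqI affine_has_derivative by metis
      next
        case apm: False
        have "\<not> ?g differentiable (at x)"
        proof
          assume "?g differentiable (at x)"
          then obtain D where D: "(?g has_derivative D) (at x)" using differentiable_def by blast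
          let ?Hp = "{y. 0 \<le> inner nv y + d}" and ?Hm = "{y. 0 \<le> inner (- nv) y + (- d)}"
          have "(?g has_derivative D) (at x within ?Hp)" using D has_derivative_at_withinI by blast
          then have "(?Ap has_derivative D) (at x within ?Hp)"
            by (rule has_derivative_transform_within[where d=1]) (use x0 in \<open>auto simp: pwf_def\<close>)
          then have d1: "D = (\<lambda>h. inner ap h)"
            using halfplane_unique[OF x0] affine_has_derivative by blast
          have "(?g has_derivative D) (at x within ?Hm)" using D has_derivative_at_withinI by blast
          then have "(?Am has_derivative D) (at x within ?Hm)"
            by (rule has_derivative_transform_within[where d=1]) (use x0 line in \<open>auto simp: pwf_def\<close>)
          moreover have x0': "inner (- nv) x + (- d) = 0" using x0 by simp
          ultimately have d2: "D = (\<lambda>h. inner am h)"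
            using halfplane_unique[OF x0'] affine_has_derivative by blast
          have "inner ap (ap - am) = inner am (ap - am)" using d1 d2 by metis
          then have "inner (ap - am) (ap - am) = 0" by (simp add: inner_diff_left)
          then show False using apm by simp
        qed
        then show ?thesis using F1 F2 apm by (simp add: grad_def)
      qed
    qed
  qed
qed

lemma borel_to_lebesgue_on: "f \<in> borel_measurable borel \<Longrightarrow> f \<in> borel_measurable (lebesgue_on S)"
  by (metis measurable_lborel2 measurable_completion measurable_restrict_space1)

lemma seg_integrable:
  fixes h :: "R2 \<Rightarrow> real"
  assumes hm: "h \<in> borel_measurable borel" and hb: "\<And>t. t \<in> {0..1} \<Longrightarrow> \<bar>h ((1 - t) *\<^sub>R A + t *\<^sub>R B)\<bar> \<le> M"
  shows "(\<lambda>t. h ((1 - t) *\<^sub>R A + t *\<^sub>R B)) integrable_on {0..1}"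
proof -
  have c: "(\<lambda>t::real. (1 - t) *\<^sub>R A + t *\<^sub>R B) \<in> borel_measurable borel"
    by (intro borel_measurable_continuous_onI continuous_intros)
  have m: "(\<lambda>t. h ((1 - t) *\<^sub>R A + t *\<^sub>R B)) \<in> borel_measurable borel"
    using measurable_compose[OF c hm] by (simp add: o_def)
  have fm: "finite_measure (lebesgue_on {0..1::real})"
    by (rule finite_measure_lebesgue_on) simp
  have "integrable (lebesgue_on {0..1}) (\<lambda>t. h ((1 - t) *\<^sub>R A + t *\<^sub>R B))"
    by (rule finite_measure.integrable_const_bound[OF fm, where B=M])
       (auto intro!: AE_I2 borel_to_lebesgue_on m hb)
  then show ?thesis by (rule integrable_on_lebesgue_on) simp
qed

lemma pwf_meas: "pwf nv d ap bp am bm \<in> borel_measurable borel"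
  unfolding pwf_def by measurable

lemma gradf_meas: "(\<lambda>x::R2. if inner nv x + d > 0 then ap else if inner nv x + d < 0 then am else (c0::R2)) \<in> borel_measurable borel"
  by measurable

lemma pwf_bound: "\<bar>pwf nv d ap bp am bm x\<bar> \<le> (norm ap + norm am) * norm x + \<bar>bp\<bar> + \<bar>bm\<bar>"
proof -
  have "\<bar>inner ap x\<bar> \<le> norm ap * norm x" "\<bar>inner am x\<bar> \<le> norm am * norm x"
    by (simp_all add: Cauchy_Schwarz_ineq2)
  moreover have "0 \<le> norm ap * norm x" "0 \<le> norm am * norm x" by simp_all
  ultimately show ?thesis unfolding pwf_def by (auto simp: algebra_simps)
qed

lemma seg_norm: "t \<in> {0..1} \<Longrightarrow> norm ((1 - t) *\<^sub>R A + t *\<^sub>R B) \<le> norm A + norm (B::R2)"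
proof -
  assume t: "t \<in> {0..1}"
  have "norm ((1 - t) *\<^sub>R A + t *\<^sub>R B) \<le> (1 - t) * norm A + t * norm B"
    using t by (metis atLeastAtMost_iff diff_ge_0_iff_ge norm_scaleR norm_triangle_le abs_of_nonneg order_refl add_mono)
  also have "\<dots> \<le> norm A + norm B" using t by (auto intro!: add_mono mult_left_le_one_le)
  finally show ?thesis .
qed

lemma line_cond_DE:
  fixes D E nv :: R2
  assumes "D \<noteq> E" "nv \<noteq> 0" "inner nv D + d = 0" "inner nv E + d = 0"
    "inner ap D + bp = inner am D + bm" "inner ap E + bp = inner am E + bm"
  shows "\<forall>x. inner nv x + d = 0 \<longrightarrow> inner ap x + bp = inner am x + bm"
proof (intro allI impI)
  fix x assume x: "inner nv x + d = 0"
  have "inner nv (x - D) = 0" "inner nv (E - D) = 0" using assms x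
    by (simp_all add: inner_diff_right)
  then have "inner (x - D) nv = 0" "inner (E - D) nv = 0" by (simp_all add: inner_commute)
  then obtain \<mu> where mu: "x - D = \<mu> *\<^sub>R (E - D)" using perp2_line assms by (metis right_minus_eq)
  then have xD: "x = D + \<mu> *\<^sub>R (E - D)" by (simp add: algebra_simps)
  have "inner (ap - am) E + (bp - bm) = 0" "inner (ap - am) D + (bp - bm) = 0" using assms
    by (simp_all add: inner_diff_left)
  moreover have "inner (ap - am) x + (bp - bm) = (inner (ap - am) D + (bp - bm))
     + \<mu> * ((inner (ap - am) E + (bp - bm)) - (inner (ap - am) D + (bp - bm)))"
    unfolding xD by (simp add: inner_add_right inner_diff_right algebra_simps)
  ultimately have "inner (ap - am) x + (bp - bm) = 0" by simp
  then show "inner ap x + bp = inner am x + bm" by (simp add: inner_diff_left)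
qed

lemma p_pw:
  assumes ph: "p \<in> E_h \<T> \<Omega> \<Omega>1 \<Omega>2 \<Gamma> \<beta>" and T: "T \<in> \<T>"
  shows "\<exists>nv d ap bp am bm. nv \<noteq> 0 \<and> (\<forall>x. inner nv x + d = 0 \<longrightarrow> inner ap x + bp = inner am x + bm)
           \<and> p T = pwf nv d ap bp am bm"
proof -
  obtain s c where sc: "s \<in> S_hat \<T> \<Omega> \<Omega>1 \<Omega>2 \<Gamma> \<beta>" "c \<in> C_h \<T>" "p = (\<lambda>T x. s T x + c T x)"
    using ph unfolding E_h_def by blast
  obtain k where k: "c T = (\<lambda>_. k)" using sc(2) T unfolding C_h_def by blast
  have sT: "s T \<in> S_loc \<Omega>1 \<Omega>2 \<Gamma> \<beta> T" using sc(1) T unfolding S_hat_def by blast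
  show ?thesis
  proof (cases "interface_elem \<Gamma> T")
    case True
    then obtain D E nv d ap bp am bm where I:
      "D \<noteq> E" "nv \<noteq> 0" "inner nv D + d = 0" "inner nv E + d = 0"
      "\<forall>x. s T x = (if 0 \<le> inner nv x + d then inner ap x + bp else inner am x + bm)"
      "inner ap D + bp = inner am D + bm" "inner ap E + bp = inner am E + bm"
    proof -
      have "s T \<in> IFE_local \<Omega>1 \<Omega>2 \<Gamma> \<beta> T" using sT True by (simp add: S_loc_def)
      then have "\<exists>D E nv d ap bp am bm. D \<noteq> E \<and> nv \<noteq> 0 \<and> inner nv D + d = 0 \<and> inner nv E + d = 0 \<and>
        (\<forall>x. s T x = (if 0 \<le> inner nv x + d then inner ap x + bp else inner am x + bm)) \<and>
        inner ap D + bp = inner am D + bm \<and> inner ap E + bp = inner am E + bm"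
        unfolding IFE_local_def mem_Collect_eq by blast
      then show ?thesis using that by blast
    qed
    have "p T = pwf nv d ap (bp + k) am (bm + k)"
      using I(5) k sc(3) by (auto simp: pwf_def fun_eq_iff)
    moreover have "\<forall>x. inner nv x + d = 0 \<longrightarrow> inner ap x + (bp + k) = inner am x + (bm + k)"
      using line_cond_DE[OF I(1-4,6,7)] by auto
    ultimately show ?thesis using I(2) by blast
  next
    case False
    then obtain a b where ab: "\<forall>x. s T x = inner a x + b" using sT unfolding S_loc_def by auto
    have "p T = pwf (axis 1 1) 0 a (b + k) a (b + k)"
      using ab k sc(3) by (auto simp: pwf_def fun_eq_iff)
    moreover have "(axis 1 1 :: R2) \<noteq> 0" by (simp add: axis_eq_0_iff)
    ultimately show ?thesis by blast
  qed
qed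

lemma zero_S_hat:
  assumes ph: "p \<in> E_h \<T> \<Omega> \<Omega>1 \<Omega>2 \<Gamma> \<beta>"
  shows "(\<lambda>T x. 0) \<in> S_hat \<T> \<Omega> \<Omega>1 \<Omega>2 \<Gamma> \<beta>"
proof -
  obtain s where s: "s \<in> S_hat \<T> \<Omega> \<Omega>1 \<Omega>2 \<Gamma> \<beta>"
    using ph unfolding E_h_def by blast
  have "(\<lambda>x. 0) \<in> S_loc \<Omega>1 \<Omega>2 \<Gamma> \<beta> T" if T: "T \<in> \<T>" for T
  proof (cases "interface_elem \<Gamma> T")
    case True
    have "s T \<in> S_loc \<Omega>1 \<Omega>2 \<Gamma> \<beta> T" using s T unfolding S_hat_def by blast
    then have sT: "s T \<in> IFE_local \<Omega>1 \<Omega>2 \<Gamma> \<beta> T" using True unfolding S_loc_def by simp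
    then obtain D E nv d ap bp am bm where I:
      "D \<noteq> E \<and> D \<in> frontier (convex hull T) \<inter> \<Gamma> \<and> E \<in> frontier (convex hull T) \<inter> \<Gamma> \<and>
      nv \<noteq> 0 \<and> inner nv D + d = 0 \<and> inner nv E + d = 0 \<and>
      (\<forall>a\<in>T. a \<in> closure \<Omega>2 - closure \<Omega>1 \<longrightarrow> 0 \<le> inner nv a + d) \<and>
      (\<forall>a\<in>T. a \<in> closure \<Omega>1 - closure \<Omega>2 \<longrightarrow> inner nv a + d \<le> 0)"
      unfolding IFE_local_def mem_Collect_eq by blast
    have "(\<lambda>x. 0) \<in> IFE_local \<Omega>1 \<Omega>2 \<Gamma> \<beta> T"
      unfolding IFE_local_def
      apply (rule CollectI)
      apply (rule exI[of _ D], rule exI[of _ E], rule exI[of _ nv], rule exI[of _ d])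
      apply (rule exI[of _ 0], rule exI[of _ 0], rule exI[of _ 0], rule exI[of _ 0])
      using I by simp
    then show ?thesis using True unfolding S_loc_def by simp
  next
    case False
    have "\<forall>x. (0::real) = inner 0 x + 0" by simp
    then show ?thesis using False unfolding S_loc_def by (simp only: if_False mem_Collect_eq) blast
  qed
  then show ?thesis unfolding S_hat_def by blast
qed

lemma ind_E_h:
  assumes ph: "p \<in> E_h \<T> \<Omega> \<Omega>1 \<Omega>2 \<Gamma> \<beta>"
  shows "(\<lambda>T' x. if T' = T then 1 else 0) \<in> E_h \<T> \<Omega> \<Omega>1 \<Omega>2 \<Gamma> \<beta>"
proof -
  have "(\<lambda>T' x. if T' = T then 1 else 0) \<in> C_h \<T>" unfolding C_h_def by auto
  then show ?thesis using zero_S_hat[OF ph] unfolding E_h_def by force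
qed

lemma pw_grad_props:
  assumes nv: "nv \<noteq> 0" and line: "\<forall>x. inner nv x + d = 0 \<longrightarrow> inner ap x + bp = inner am x + bm"
  shows "grad (pwf nv d ap bp am bm) \<in> borel_measurable borel"
    and "norm (grad (pwf nv d ap bp am bm) x) \<le> norm ap + norm am"
proof -
  have g: "grad (pwf nv d ap bp am bm) = (\<lambda>x. if inner nv x + d > 0 then ap else if inner nv x + d < 0 then am else (if ap = am then ap else 0))"
    using grad_pwf[OF nv line] by (simp add: fun_eq_iff)
  show "grad (pwf nv d ap bp am bm) \<in> borel_measurable borel" unfolding g by (rule gradf_meas)
  show "norm (grad (pwf nv d ap bp am bm) x) \<le> norm ap + norm am" unfolding g by auto
qed

lemma flux_integrable:
  fixes A B v :: R2
  assumes fin: "finite (nbrs \<T> e)"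
    and pw: "\<forall>T'\<in>nbrs \<T> e. \<exists>nv d ap bp am bm. nv \<noteq> 0 \<and> (\<forall>x. inner nv x + d = 0 \<longrightarrow> inner ap x + bp = inner am x + bm) \<and> p T' = pwf nv d ap bp am bm"
    and bm: "\<beta> \<in> borel_measurable borel"
    and bb: "\<forall>t\<in>{0..1}. \<bar>\<beta> ((1 - t) *\<^sub>R A + t *\<^sub>R B)\<bar> \<le> H"
  shows "(\<lambda>t. inner (avgflux \<T> \<beta> p e ((1 - t) *\<^sub>R A + t *\<^sub>R B)) v) integrable_on {0..1}"
    and "(\<lambda>t. inner (jump \<T> p e ((1 - t) *\<^sub>R A + t *\<^sub>R B)) w) integrable_on {0..1}"
proof -
  let ?g = "\<lambda>t. (1 - t) *\<^sub>R A + t *\<^sub>R B"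
  have H0: "0 \<le> H" using bb[rule_format, of 0] by auto
  have each: "(\<lambda>t. \<beta> (?g t) * inner (grad (p T') (?g t)) v) integrable_on {0..1}" if T': "T' \<in> nbrs \<T> e" for T'
  proof -
    obtain nv d ap bp am bm where P: "nv \<noteq> 0" "\<forall>x. inner nv x + d = 0 \<longrightarrow> inner ap x + bp = inner am x + bm"
      "p T' = pwf nv d ap bp am bm" using pw T' by blast
    note gp = pw_grad_props[OF P(1,2)]
    have m: "(\<lambda>x. \<beta> x * inner (grad (p T') x) v) \<in> borel_measurable borel"
      unfolding P(3) using gp(1) bm by measurable
    have "\<bar>\<beta> (?g t) * inner (grad (p T') (?g t)) v\<bar> \<le> H * ((norm ap + norm am) * norm v)" if t: "t \<in> {0..1}" for t
    proof -
      have "\<bar>inner (grad (p T') (?g t)) v\<bar> \<le> norm (grad (p T') (?g t)) * norm v" by (rule Cauchy_Schwarz_ineq2)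
      also have "\<dots> \<le> (norm ap + norm am) * norm v" unfolding P(3) using gp(2) by (intro mult_right_mono) auto
      finally have "\<bar>inner (grad (p T') (?g t)) v\<bar> \<le> (norm ap + norm am) * norm v" .
      then show ?thesis using bb t by (simp add: abs_mult mult_mono' H0)
    qed
    then show ?thesis using seg_integrable[OF m] by blast
  qed
  have eq1: "(\<lambda>t. inner (avgflux \<T> \<beta> p e (?g t)) v) = (\<lambda>t. (1 / real (card (nbrs \<T> e))) * (\<Sum>T'\<in>nbrs \<T> e. \<beta> (?g t) * inner (grad (p T') (?g t)) v))"
    by (simp add: avgflux_def inner_sum_left)
  show "(\<lambda>t. inner (avgflux \<T> \<beta> p e (?g t)) v) integrable_on {0..1}"
  proof -
    have "(\<lambda>t. \<Sum>T'\<in>nbrs \<T> e. \<beta> (?g t) * inner (grad (p T') (?g t)) v) integrable_on {0..1}"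
      by (intro integrable_sum fin each)
    from integrable_on_cmult_left[OF this, of "1 / real (card (nbrs \<T> e))"]
    show ?thesis unfolding eq1 by simp
  qed
  have each2: "(\<lambda>t. p T' (?g t) * inner (outn T' e) w) integrable_on {0..1}" if T': "T' \<in> nbrs \<T> e" for T'
  proof -
    obtain nv d ap bp am bm where P: "nv \<noteq> 0" "\<forall>x. inner nv x + d = 0 \<longrightarrow> inner ap x + bp = inner am x + bm"
      "p T' = pwf nv d ap bp am bm" using pw T' by blast
    have m: "(\<lambda>x. p T' x * inner (outn T' e) w) \<in> borel_measurable borel"
      unfolding P(3) using pwf_meas by measurable
    have "\<bar>p T' (?g t) * inner (outn T' e) w\<bar> \<le> ((norm ap + norm am) * (norm A + norm B) + \<bar>bp\<bar> + \<bar>bm\<bar>) * \<bar>inner (outn T' e) w\<bar>" if t: "t \<in> {0..1}" for t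
    proof -
      have "\<bar>p T' (?g t)\<bar> \<le> (norm ap + norm am) * norm (?g t) + \<bar>bp\<bar> + \<bar>bm\<bar>" unfolding P(3) by (rule pwf_bound)
      also have "\<dots> \<le> (norm ap + norm am) * (norm A + norm B) + \<bar>bp\<bar> + \<bar>bm\<bar>"
        using seg_norm[OF t] by (intro add_mono mult_left_mono) auto
      finally show ?thesis by (simp add: abs_mult mult_right_mono)
    qed
    then show ?thesis using seg_integrable[OF m] by blast
  qed
  have eq2: "(\<lambda>t. inner (jump \<T> p e (?g t)) w) = (\<lambda>t. \<Sum>T'\<in>nbrs \<T> e. p T' (?g t) * inner (outn T' e) w)"
    by (simp add: jump_def inner_sum_left)
  show "(\<lambda>t. inner (jump \<T> p e (?g t)) w) integrable_on {0..1}"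
    unfolding eq2 by (intro integrable_sum fin each2)
qed

lemma negligible_hull2:
  fixes S :: "R2 set"
  assumes "finite S" "card S \<le> 2"
  shows "negligible (convex hull S)"
proof -
  obtain a b where ab: "S \<subseteq> {a, b}"
  proof (cases "S = {}")
    case True then show ?thesis using that by blast
  next
    case False
    then obtain a where a: "a \<in> S" by blast
    have "card (S - {a}) \<le> 1" using assms a by (simp add: card_Diff_singleton)
    then have "S - {a} = {} \<or> (\<exists>b. S - {a} = {b})"
      using assms by (metis card_0_eq card_1_singletonE finite_Diff le_Suc_eq One_nat_def le_zero_eq)
    then show ?thesis using that a by blast
  qed
  have sub: "convex hull S \<subseteq> closed_segment a b"
    unfolding segment_convex_hull by (rule hull_mono[OF ab])
  have "negligible (closed_segment a b)"
  proof (cases "a = b")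
    case True then show ?thesis by simp
  next
    case False
    let ?c = "perpv (b - a)"
    have c: "?c \<noteq> 0" using False perpv_nz by simp
    have "closed_segment a b \<subseteq> {x. inner ?c x = inner ?c a}"
    proof
      fix x assume "x \<in> closed_segment a b"
      then obtain u where "x = (1 - u) *\<^sub>R a + u *\<^sub>R b" unfolding closed_segment_def by auto
      then have "x = a + u *\<^sub>R (b - a)" by (simp add: algebra_simps)
      then have "inner ?c x = inner ?c a + u * inner ?c (b - a)" by (simp add: inner_add_right)
      moreover have "inner ?c (b - a) = 0" by (simp add: perpv_inner)
      ultimately show "x \<in> {x. inner ?c x = inner ?c a}" by simp
    qed
    then show ?thesis using negligible_hyperplane c negligible_subset by blast
  qed
  then show ?thesis using sub negligible_subset by blast
qed

lemma abs_le_sq1: "\<bar>y::real\<bar> \<le> 1 + y\<^sup>2"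
proof (cases "\<bar>y\<bar> \<le> 1")
  case True then show ?thesis by (smt (verit) zero_le_power2)
next
  case False
  then have "\<bar>y\<bar> * 1 \<le> \<bar>y\<bar> * \<bar>y\<bar>" by (intro mult_left_mono) auto
  then show ?thesis by (simp add: power2_eq_square abs_mult_self_eq)
qed

lemma sum_tri_integral:
  fixes f :: "R2 \<Rightarrow> real"
  assumes dom: "convex_polygonal_domain \<Omega>" and mesh: "conforming_triangulation \<T> \<Omega>"
    and fm: "f \<in> borel_measurable (lebesgue_on \<Omega>)" and f2: "integrable (lebesgue_on \<Omega>) (\<lambda>x. (f x)\<^sup>2)"
  shows "(\<Sum>T\<in>\<T>. LINT x:convex hull T|lebesgue. f x) = (LINT x:\<Omega>|lebesgue. f x)"
proof -
  obtain P where P: "polytope P" "\<Omega> = interior P" using dom unfolding convex_polygonal_domain_def by blast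
  have op: "open \<Omega>" using P by simp
  have bd: "bounded \<Omega>" using P polytope_imp_compact compact_imp_bounded bounded_interior by blast
  have cv: "convex \<Omega>" using P polytope_imp_convex convex_interior by blast
  have lm: "\<Omega> \<in> lmeasurable" using lmeasurable_open bd op by blast
  then have sl: "\<Omega> \<in> sets lebesgue" by (simp add: fmeasurable_def)
  have fin: "finite \<T>" and tri: "\<And>T. T \<in> \<T> \<Longrightarrow> is_triangle T"
    and cov: "\<Union>((\<lambda>T. convex hull T) ` \<T>) = closure \<Omega>"
    and conf: "\<And>T T'. T \<in> \<T> \<Longrightarrow> T' \<in> \<T> \<Longrightarrow> T \<noteq> T' \<Longrightarrow> convex hull T \<inter> convex hull T' = convex hull (T \<inter> T')"
    using mesh unfolding conforming_triangulation_def by auto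
  have fmeas: "finite_measure (lebesgue_on \<Omega>)" using finite_measure_lebesgue_on[OF lm] .
  have "integrable (lebesgue_on \<Omega>) (\<lambda>x. 1 + (f x)\<^sup>2)"
    using f2 finite_measure.integrable_const[OF fmeas] by (intro Bochner_Integration.integrable_add) auto
  then have fi: "integrable (lebesgue_on \<Omega>) f"
    by (rule Bochner_Integration.integrable_bound) (use fm abs_le_sq1 in auto)
  define g where "g x = indicator \<Omega> x * f x" for x
  have gi: "integrable lebesgue g"
    using fi integrable_restrict_space[of \<Omega> lebesgue f] sl unfolding g_def by simp
  have gm: "g \<in> borel_measurable lebesgue" using gi by (rule borel_measurable_integrable)
  define N where "N = frontier \<Omega> \<union> (\<Union>T\<in>\<T>. \<Union>T'\<in>\<T> - {T}. convex hull T \<inter> convex hull T')"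
  have negN: "negligible N"
  proof -
    have "negligible (frontier \<Omega>)" using negligible_convex_frontier cv by blast
    moreover have pair: "negligible (convex hull T \<inter> convex hull T')" if "T \<in> \<T>" "T' \<in> \<T> - {T}" for T T'
    proof -
      have ne: "T \<noteq> T'" using that by auto
      have c3: "card T = 3" "card T' = 3" using tri that unfolding is_triangle_def by auto
      then have fT: "finite T" "finite T'" by (metis card.infinite zero_neq_numeral)+
      have "card (T \<inter> T') \<le> 2"
      proof (rule ccontr)
        assume "\<not> card (T \<inter> T') \<le> 2"
        then have "card (T \<inter> T') \<ge> 3" by simp
        then have "T \<inter> T' = T" "T \<inter> T' = T'" using c3 fT
          by (metis Int_lower1 Int_lower2 card_seteq)+
        then show False using ne by simp
      qed
      then have "negligible (convex hull (T \<inter> T'))" using negligible_hull2 fT by simp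
      then show ?thesis using conf that ne by simp
    qed
    moreover have "negligible (\<Union>T\<in>\<T>. \<Union>T'\<in>\<T> - {T}. convex hull T \<inter> convex hull T')"
    proof (rule negligible_Union)
      show "finite ((\<lambda>T. \<Union>T'\<in>\<T> - {T}. convex hull T \<inter> convex hull T') ` \<T>)" using fin by simp
      fix X assume "X \<in> (\<lambda>T. \<Union>T'\<in>\<T> - {T}. convex hull T \<inter> convex hull T') ` \<T>"
      then obtain T where T: "T \<in> \<T>" "X = (\<Union>T'\<in>\<T> - {T}. convex hull T \<inter> convex hull T')" by blast
      show "negligible X" unfolding T(2)
      proof (rule negligible_Union)
        show "finite ((\<lambda>T'. convex hull T \<inter> convex hull T') ` (\<T> - {T}))" using fin by simp
      qed (use T pair in blast)
    qed
    ultimately show ?thesis unfolding N_def by (blast intro: negligible_Un)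
  qed
  then have Nnull: "N \<in> null_sets lebesgue" by (simp add: negligible_iff_null_sets)
  have inO: "x \<in> \<Omega>" if "x \<in> convex hull T" "T \<in> \<T>" "x \<notin> N" for x T
  proof -
    have "x \<in> closure \<Omega>" using cov that by blast
    moreover have "x \<notin> frontier \<Omega>" using that unfolding N_def by blast
    ultimately show ?thesis using op by (simp add: frontier_def interior_open)
  qed
  have finT: "finite T" if "T \<in> \<T>" for T using tri that unfolding is_triangle_def by (metis card.infinite zero_neq_numeral)
  have hullm: "convex hull T \<in> sets lebesgue" if "T \<in> \<T>" for T
    using finT[OF that]
    by (simp add: borel_closed compact_imp_closed finite_imp_compact_convex_hull sets_completionI_sets)
  have step1: "(LINT x:convex hull T|lebesgue. f x) = integral\<^sup>L lebesgue (\<lambda>x. indicator (convex hull T) x * g x)"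
    if T: "T \<in> \<T>" for T
  proof -
    have m2: "(\<lambda>x. indicator (convex hull T) x * g x) \<in> borel_measurable lebesgue"
      using gm hullm[OF T] by measurable
    have ae: "AE x in lebesgue. indicator (convex hull T) x * g x = indicator (convex hull T) x *\<^sub>R f x"
    proof (rule AE_I'[OF Nnull])
      show "{x \<in> space lebesgue. \<not> indicator (convex hull T) x * g x = indicator (convex hull T) x *\<^sub>R f x} \<subseteq> N"
        using inO[OF _ T] by (auto simp: g_def indicator_def)
    qed
    have m1: "(\<lambda>x. indicator (convex hull T) x *\<^sub>R f x) \<in> borel_measurable lebesgue"
      using borel_measurable_AE[OF m2 ae] .
    show ?thesis unfolding set_lebesgue_integral_def
      by (rule integral_cong_AE[OF m1 m2]) (use ae in \<open>auto elim: AE_mp\<close>)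
  qed
  have "(\<Sum>T\<in>\<T>. LINT x:convex hull T|lebesgue. f x) = (\<Sum>T\<in>\<T>. integral\<^sup>L lebesgue (\<lambda>x. indicator (convex hull T) x * g x))"
    using step1 by simp
  also have "\<dots> = integral\<^sup>L lebesgue (\<lambda>x. \<Sum>T\<in>\<T>. indicator (convex hull T) x * g x)"
  proof -
    have "integrable lebesgue (\<lambda>x. indicator (convex hull T) x * g x)" if "T \<in> \<T>" for T
      using integrable_mult_indicator[OF hullm[OF that] gi] by simp
    then show ?thesis using Bochner_Integration.integral_sum[of \<T> lebesgue "\<lambda>T x. indicator (convex hull T) x * g x"] by simp
  qed
  also have "\<dots> = integral\<^sup>L lebesgue g"
  proof (rule integral_cong_AE)
    show "(\<lambda>x. \<Sum>T\<in>\<T>. indicator (convex hull T) x * g x) \<in> borel_measurable lebesgue"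
      using gm hullm by measurable
    show "g \<in> borel_measurable lebesgue" by (rule gm)
    show "AE x in lebesgue. (\<Sum>T\<in>\<T>. indicator (convex hull T) x * g x) = g x"
    proof (rule AE_I'[OF Nnull], rule subsetI, rule ccontr)
      fix x assume x: "x \<in> {x \<in> space lebesgue. (\<Sum>T\<in>\<T>. indicator (convex hull T) x * g x) \<noteq> g x}" and xN: "x \<notin> N"
      show False
      proof (cases "x \<in> \<Omega>")
        case False
        then show False using x by (simp add: g_def)
      next
        case True
        then have "x \<in> closure \<Omega>" using closure_subset by blast
        then obtain T0 where T0: "T0 \<in> \<T>" "x \<in> convex hull T0" using cov by blast
        have "indicator (convex hull T) x * g x = (if T = T0 then g x else 0)" if "T \<in> \<T>" for T
        proof (cases "T = T0")
          case True then show ?thesis using T0 by simp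
        next
          case False
          then have "x \<notin> convex hull T" using xN T0 that unfolding N_def by blast
          then show ?thesis using False by simp
        qed
        then have "(\<Sum>T\<in>\<T>. indicator (convex hull T) x * g x) = (\<Sum>T\<in>\<T>. if T = T0 then g x else 0)"
          by (intro sum.cong) auto
        also have "\<dots> = g x" using T0 fin by simp
        finally show False using x by simp
      qed
    qed
  qed
  also have "\<dots> = (LINT x:\<Omega>|lebesgue. f x)" unfolding set_lebesgue_integral_def g_def by simp
  finally show ?thesis .
qed

lemma edge_int_cmult: "edge_int e (\<lambda>x. c * g x) = c * edge_int e g"
  by (simp add: edge_int_def)

lemma edge_int_const: "edge_int e (\<lambda>x. c) = elen e * c"
  by (simp add: edge_int_def)

lemma edge_int_cong:
  assumes "\<And>t. t \<in> {0..1} \<Longrightarrow> g ((1 - t) *\<^sub>R ep1 e + t *\<^sub>R ep2 e) = h ((1 - t) *\<^sub>R ep1 e + t *\<^sub>R ep2 e)"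
  shows "edge_int e g = edge_int e h"
  unfolding edge_int_def using assms by (metis (no_types, lifting) integral_cong)

lemma edge_int_add:
  assumes "(\<lambda>t. g ((1 - t) *\<^sub>R ep1 e + t *\<^sub>R ep2 e)) integrable_on {0..1}"
    "(\<lambda>t. h ((1 - t) *\<^sub>R ep1 e + t *\<^sub>R ep2 e)) integrable_on {0..1}"
  shows "edge_int e (\<lambda>x. g x + h x) = edge_int e g + edge_int e h"
  unfolding edge_int_def using integral_add[OF assms] by (simp add: algebra_simps)

lemma edge_int_neg: "edge_int e (\<lambda>x. - g x) = - edge_int e g"
  by (simp add: edge_int_def)

lemma grad_const: "grad (\<lambda>x. c) x = 0"
proof -
  have "((\<lambda>x::R2. c) has_derivative (\<lambda>h. inner 0 h)) (at x)" by (simp add: has_derivative_const)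
  then show ?thesis by (rule grad_eqI)
qed

lemma jump_w:
  assumes "finite (nbrs \<T> e)"
  shows "jump \<T> (\<lambda>T' x. if T' = T then 1 else 0) e x = (if T \<in> nbrs \<T> e then outn T e else 0)"
proof -
  have "jump \<T> (\<lambda>T' x. if T' = T then 1 else 0) e x = (\<Sum>T'\<in>nbrs \<T> e. if T' = T then outn T' e else 0)"
    unfolding jump_def by (intro sum.cong) auto
  also have "\<dots> = (if T \<in> nbrs \<T> e then outn T e else 0)" using assms by (simp add: sum.delta')
  finally show ?thesis .
qed

lemma avgflux_w: "avgflux \<T> \<beta> (\<lambda>T' x. if T' = T then 1 else 0) e x = 0"
proof -
  have g: "grad ((\<lambda>T' x. if T' = T then (1::real) else 0) T') x = 0" for T'
    using grad_const[of "if T' = T then (1::real) else 0" x] by (simp add: if_distrib)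
  show ?thesis unfolding avgflux_def by (simp add: g)
qed

theorem mainTheorem3:
  fixes \<Omega> \<Omega>1 \<Omega>2 \<Gamma> :: "R2 set" and \<T> :: "R2 set set"
    and \<beta> f :: "R2 \<Rightarrow> real" and \<sigma> :: "R2 set \<Rightarrow> real" and \<theta> :: real
    and ne :: "R2 set \<Rightarrow> R2"
    and p :: "R2 set \<Rightarrow> R2 \<Rightarrow> real" and u :: "R2 set \<Rightarrow> R2 \<Rightarrow> R2"
  assumes dom: "convex_polygonal_domain \<Omega>"
    and sub: "open \<Omega>1" "open \<Omega>2" "\<Omega>1 \<inter> \<Omega>2 = {}" "\<Omega>1 \<inter> \<Gamma> = {}" "\<Omega>2 \<inter> \<Gamma> = {}"
             "\<Omega> = \<Omega>1 \<union> \<Gamma> \<union> \<Omega>2"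
    and curve: "C2_curve \<Omega> \<Gamma>"
    and beta_C1: "\<forall>S\<in>{\<Omega>1, \<Omega>2}. \<exists>g :: R2 \<Rightarrow> R2. continuous_on S g \<and>
                    (\<forall>x\<in>S. (\<beta> has_derivative (\<lambda>h. inner (g x) h)) (at x))"
    and beta_meas: "\<beta> \<in> borel_measurable borel"
    and beta_bnd: "\<exists>lo hi. 0 < lo \<and> (\<forall>x\<in>closure \<Omega>. lo < \<beta> x \<and> \<beta> x < hi)"
    and mesh: "conforming_triangulation \<T> \<Omega>"
    and cut: "\<forall>T\<in>\<T>. interface_elem \<Gamma> T \<longrightarrow> card (frontier (convex hull T) \<inter> \<Gamma>) = 2"
    and normals: "\<forall>e\<in>mesh_edges \<T>. norm (ne e) = 1 \<and> (\<forall>A\<in>e. \<forall>B\<in>e. inner (ne e) (B - A) = 0)"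
    and theta: "\<theta> \<in> {-1, 0, 1}"
    and sigma: "\<forall>e\<in>mesh_edges \<T>. 0 < \<sigma> e"
    and f_L2: "f \<in> borel_measurable (lebesgue_on \<Omega>)" "integrable (lebesgue_on \<Omega>) (\<lambda>x. (f x)\<^sup>2)"
    and ph: "p \<in> E_h \<T> \<Omega> \<Omega>1 \<Omega>2 \<Gamma> \<beta>"
    and scheme: "\<forall>w\<in>E_h \<T> \<Omega> \<Omega>1 \<Omega>2 \<Gamma> \<beta>. a_h \<T> \<beta> \<sigma> \<theta> p w = l2ip \<T> f w"
    and uRT: "u \<in> RT0 \<T>"
    and udof: "\<forall>e\<in>mesh_edges \<T>. \<forall>T\<in>nbrs \<T> e. \<forall>x\<in>convex hull e.
                 inner (u T x) (ne e) = rt_dof \<T> \<beta> \<sigma> ne p e"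
  shows "(\<forall>T\<in>\<T>. (\<Sum>e\<in>edges_of T. edge_int e (\<lambda>x. inner (u T x) (outn T e)))
                  = (LINT x:convex hull T|lebesgue. f x))
       \<and> (\<Sum>e\<in>bdry_edges \<T>. \<Sum>T\<in>nbrs \<T> e. edge_int e (\<lambda>x. inner (u T x) (outn T e)))
           = (LINT x:\<Omega>|lebesgue. f x)"
proof -
  have fin: "finite \<T>" and tri: "\<And>T. T \<in> \<T> \<Longrightarrow> is_triangle T"
    and cov: "\<Union>((\<lambda>T. convex hull T) ` \<T>) = closure \<Omega>"
    using mesh unfolding conforming_triangulation_def by auto
  have finT: "finite T" if "T \<in> \<T>" for T using tri that unfolding is_triangle_def by (metis card.infinite zero_neq_numeral)
  have finM: "finite (mesh_edges \<T>)"
  proof (rule finite_subset)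
    show "mesh_edges \<T> \<subseteq> Pow (\<Union>\<T>)" unfolding mesh_edges_def by auto
    show "finite (Pow (\<Union>\<T>))" using fin finT by simp
  qed
  have finN: "finite (nbrs \<T> e)" for e using fin unfolding nbrs_def by simp
  have mcard: "card e = 2" if "e \<in> mesh_edges \<T>" for e using that unfolding mesh_edges_def by auto
  have ncard: "card (nbrs \<T> e) = 1 \<or> card (nbrs \<T> e) = 2" if "e \<in> mesh_edges \<T>" for e
    using nbrs_card[OF mesh that] .
  have ib: "int_edges \<T> \<subseteq> mesh_edges \<T>" "bdry_edges \<T> \<subseteq> mesh_edges \<T>" "int_edges \<T> \<inter> bdry_edges \<T> = {}"
    "mesh_edges \<T> = int_edges \<T> \<union> bdry_edges \<T>"
    using ncard unfolding int_edges_def bdry_edges_def by auto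
  have edges_eq: "edges_of T = {e \<in> mesh_edges \<T>. T \<in> nbrs \<T> e}" if "T \<in> \<T>" for T
    using that unfolding edges_of_def mesh_edges_def nbrs_def by auto
  have nbrs_in: "T \<in> \<T>" if "T \<in> nbrs \<T> e" for T e using that unfolding nbrs_def by auto
  have nbrs_sub: "e \<subseteq> T" if "T \<in> nbrs \<T> e" for T e using that unfolding nbrs_def by auto
  have pw: "\<forall>T'\<in>nbrs \<T> e. \<exists>nv d ap bp am bm. nv \<noteq> 0 \<and> (\<forall>x. inner nv x + d = 0 \<longrightarrow> inner ap x + bp = inner am x + bm) \<and> p T' = pwf nv d ap bp am bm" for e
    using p_pw[OF ph] nbrs_in by blast
  obtain lo hi where lohi: "0 < lo" "\<forall>x\<in>closure \<Omega>. lo < \<beta> x \<and> \<beta> x < hi" using beta_bnd by blast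
  have bb: "\<bar>\<beta> x\<bar> \<le> hi" if "x \<in> closure \<Omega>" for x using lohi that by fastforce
  have seg_hull: "(1 - t) *\<^sub>R ep1 e + t *\<^sub>R ep2 e \<in> convex hull e" if "e \<in> mesh_edges \<T>" "t \<in> {0..1}" for e t
  proof -
    have "(1 - t) *\<^sub>R ep1 e + t *\<^sub>R ep2 e \<in> closed_segment (ep1 e) (ep2 e)"
      using that(2) unfolding closed_segment_def by auto
    then show ?thesis unfolding segment_convex_hull using ep_basic[OF mcard[OF that(1)]] by metis
  qed
  have seg_cl: "(1 - t) *\<^sub>R ep1 e + t *\<^sub>R ep2 e \<in> closure \<Omega>" if em: "e \<in> mesh_edges \<T>" "t \<in> {0..1}" for e t
  proof -
    obtain T0 where T0: "T0 \<in> \<T>" "e \<subseteq> T0" using em(1) unfolding mesh_edges_def by blast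
    have "convex hull e \<subseteq> convex hull T0" using T0 by (simp add: hull_mono)
    then show ?thesis using seg_hull[OF em] cov T0 by blast
  qed
  have integ: "(\<lambda>t. inner (avgflux \<T> \<beta> p e ((1 - t) *\<^sub>R ep1 e + t *\<^sub>R ep2 e)) v) integrable_on {0..1}"
    "(\<lambda>t. inner (jump \<T> p e ((1 - t) *\<^sub>R ep1 e + t *\<^sub>R ep2 e)) v) integrable_on {0..1}"
    if "e \<in> mesh_edges \<T>" for e v
    using flux_integrable[OF finN pw beta_meas, where H=hi and A="ep1 e" and B="ep2 e"] bb seg_cl[OF that] by auto
  have nprops: "norm (ne e) = 1" "inner (ne e) (ep2 e - ep1 e) = 0" if "e \<in> mesh_edges \<T>" for e
  proof -
    have "ep1 e \<in> e" "ep2 e \<in> e" using ep_basic[OF mcard[OF that]] by auto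
    then show "norm (ne e) = 1" "inner (ne e) (ep2 e - ep1 e) = 0" using normals that by auto
  qed
  have sgn: "inner (outn T e) (ne e) *\<^sub>R ne e = outn T e" if "e \<in> mesh_edges \<T>" for e T
    using outn_ne[where ne=ne, OF mcard[OF that] nprops[OF that]] .
  have epos: "elen e > 0" if "e \<in> mesh_edges \<T>" for e using elen_pos[OF mcard[OF that]] .
  have local: "(\<Sum>e\<in>edges_of T. edge_int e (\<lambda>x. inner (u T x) (outn T e))) = (LINT x:convex hull T|lebesgue. f x)"
    if T: "T \<in> \<T>" for T
  proof -
    define w where "w = (\<lambda>T' (x::R2). if T' = T then (1::real) else 0)"
    have wE: "w \<in> E_h \<T> \<Omega> \<Omega>1 \<Omega>2 \<Gamma> \<beta>" unfolding w_def by (rule ind_E_h[OF ph])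
    have sch: "a_h \<T> \<beta> \<sigma> \<theta> p w = l2ip \<T> f w" using scheme wE by blast
    have l2: "l2ip \<T> f w = (LINT x:convex hull T|lebesgue. f x)"
    proof -
      have "l2ip \<T> f w = (\<Sum>T'\<in>\<T>. if T' = T then (LINT x:convex hull T|lebesgue. f x) else 0)"
        unfolding l2ip_def w_def by (intro sum.cong) auto
      also have "\<dots> = (LINT x:convex hull T|lebesgue. f x)" using fin T by simp
      finally show ?thesis .
    qed
    define F where "F e = edge_int e (\<lambda>x. inner (avgflux \<T> \<beta> p e x) (outn T e))" for e
    define Pn where "Pn e = (\<sigma> e / elen e) * edge_int e (\<lambda>x. inner (jump \<T> p e x) (outn T e))" for e
    have gw: "grad (w T') x = 0" for T' x unfolding w_def using grad_const[of "if T' = T then (1::real) else 0" x] by simp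
    have jw: "jump \<T> w e x = (if T \<in> nbrs \<T> e then outn T e else 0)" for e x
      unfolding w_def by (rule jump_w[OF finN])
    have aw: "avgflux \<T> \<beta> w e x = 0" for e x unfolding w_def by (rule avgflux_w)
    have t1: "(\<Sum>T'\<in>\<T>. LINT x:convex hull T'|lebesgue. \<beta> x * inner (grad (p T') x) (grad (w T') x)) = 0"
      by (simp add: gw)
    have t2: "(\<Sum>e\<in>mesh_edges \<T>. edge_int e (\<lambda>x. inner (avgflux \<T> \<beta> p e x) (jump \<T> w e x))) = (\<Sum>e\<in>edges_of T. F e)"
    proof -
      have "(\<Sum>e\<in>mesh_edges \<T>. edge_int e (\<lambda>x. inner (avgflux \<T> \<beta> p e x) (jump \<T> w e x)))
          = (\<Sum>e\<in>mesh_edges \<T>. if T \<in> nbrs \<T> e then F e else 0)"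
        by (intro sum.cong) (auto simp: jw F_def edge_int_const)
      also have "\<dots> = (\<Sum>e\<in>edges_of T. F e)" unfolding edges_eq[OF T] using finM by (simp add: sum.inter_filter)
      finally show ?thesis .
    qed
    have t3: "(\<Sum>e\<in>int_edges \<T>. edge_int e (\<lambda>x. inner (avgflux \<T> \<beta> w e x) (jump \<T> p e x))) = 0"
      by (simp add: aw edge_int_const)
    have t4: "(\<Sum>e\<in>bdry_edges \<T>. edge_int e (\<lambda>x. inner (avgflux \<T> \<beta> w e x) (jumpQ \<T> p e))) = 0"
      by (simp add: aw edge_int_const)
    have t5: "(\<Sum>e\<in>int_edges \<T>. (1 / elen e) * edge_int e (\<lambda>x. \<sigma> e * inner (jump \<T> p e x) (jump \<T> w e x)))
        = (\<Sum>e\<in>int_edges \<T>. if T \<in> nbrs \<T> e then Pn e else 0)"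
      by (intro sum.cong) (auto simp: jw Pn_def edge_int_const edge_int_cmult)
    have t6: "(\<Sum>e\<in>bdry_edges \<T>. (1 / elen e) * edge_int e (\<lambda>x. \<sigma> e * inner (jumpQ \<T> p e) (jumpQ \<T> w e)))
        = (\<Sum>e\<in>bdry_edges \<T>. if T \<in> nbrs \<T> e then Pn e else 0)"
    proof (intro sum.cong refl)
      fix e assume eb: "e \<in> bdry_edges \<T>"
      then have em: "e \<in> mesh_edges \<T>" using ib by auto
      obtain T0 where T0: "nbrs \<T> e = {T0}" using eb unfolding bdry_edges_def by (auto simp: card_1_singleton_iff)
      have ep: "elen e > 0" using epos[OF em] .
      have avw: "avgval \<T> w e x = (if T0 = T then 1 else 0)" for x unfolding avgval_def T0 w_def by simp
      have Qw: "Q0 \<T> w e = (if T0 = T then 1 else 0)" unfolding Q0_def avw using ep by (simp add: edge_int_const)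
      have jQw: "jumpQ \<T> w e = (if T0 = T then outn T e else 0)" unfolding jumpQ_def T0 Qw by simp
      show "(1 / elen e) * edge_int e (\<lambda>x. \<sigma> e * inner (jumpQ \<T> p e) (jumpQ \<T> w e))
          = (if T \<in> nbrs \<T> e then Pn e else 0)"
      proof (cases "T0 = T")
        case False then show ?thesis using T0 jQw by (simp add: edge_int_const)
      next
        case True
        have no: "inner (outn T e) (outn T e) = 1" using outn_props(1)[OF mcard[OF em]] by (simp add: norm_eq_1)
        have jQp: "inner (jumpQ \<T> p e) (outn T e) = Q0 \<T> p e" unfolding jumpQ_def T0 True using no by simp
        have avp: "avgval \<T> p e x = p T x" for x unfolding avgval_def T0 True by simp
        have jp: "inner (jump \<T> p e x) (outn T e) = p T x" for x unfolding jump_def T0 True using no by simp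
        have "(1 / elen e) * edge_int e (\<lambda>x. \<sigma> e * inner (jumpQ \<T> p e) (jumpQ \<T> w e)) = \<sigma> e * Q0 \<T> p e"
          using True jQw jQp ep by (simp add: edge_int_const)
        also have "\<dots> = Pn e" unfolding Pn_def Q0_def jp avp by simp
        finally show ?thesis using True T0 by simp
      qed
    qed
    have t56: "(\<Sum>e\<in>int_edges \<T>. if T \<in> nbrs \<T> e then Pn e else 0) + (\<Sum>e\<in>bdry_edges \<T>. if T \<in> nbrs \<T> e then Pn e else 0)
        = (\<Sum>e\<in>edges_of T. Pn e)"
    proof -
      have "(\<Sum>e\<in>int_edges \<T>. if T \<in> nbrs \<T> e then Pn e else 0) + (\<Sum>e\<in>bdry_edges \<T>. if T \<in> nbrs \<T> e then Pn e else 0)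
          = (\<Sum>e\<in>mesh_edges \<T>. if T \<in> nbrs \<T> e then Pn e else 0)"
        unfolding ib(4) using finM ib by (intro sum.union_disjoint[symmetric]) (auto intro: finite_subset)
      also have "\<dots> = (\<Sum>e\<in>edges_of T. Pn e)" unfolding edges_eq[OF T] using finM by (simp add: sum.inter_filter)
      finally show ?thesis .
    qed
    have ah: "a_h \<T> \<beta> \<sigma> \<theta> p w = - (\<Sum>e\<in>edges_of T. F e) + (\<Sum>e\<in>edges_of T. Pn e)"
      unfolding a_h_def t1 t2 t3 t4 t5 t6 t56[symmetric] by simp
    have lhs: "edge_int e (\<lambda>x. inner (u T x) (outn T e)) = - F e + Pn e" if eT: "e \<in> edges_of T" for e
    proof -
      have em: "e \<in> mesh_edges \<T>" and Tn: "T \<in> nbrs \<T> e" using eT edges_eq[OF T] by auto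
      define s where "s = inner (outn T e) (ne e)"
      have sn: "s *\<^sub>R ne e = outn T e" unfolding s_def by (rule sgn[OF em])
      have ep: "elen e > 0" using epos[OF em] .
      have "edge_int e (\<lambda>x. inner (u T x) (outn T e)) = edge_int e (\<lambda>x. s * rt_dof \<T> \<beta> \<sigma> ne p e)"
      proof (rule edge_int_cong)
        fix t :: real assume t: "t \<in> {0..1}"
        let ?x = "(1 - t) *\<^sub>R ep1 e + t *\<^sub>R ep2 e"
        have "inner (u T ?x) (ne e) = rt_dof \<T> \<beta> \<sigma> ne p e" using udof em Tn seg_hull[OF em t] by blast
        then show "inner (u T ?x) (outn T e) = s * rt_dof \<T> \<beta> \<sigma> ne p e"
          unfolding sn[symmetric] by simp
      qed
      also have "\<dots> = edge_int e (\<lambda>x. s * (- inner (avgflux \<T> \<beta> p e x) (ne e) + (\<sigma> e / elen e) * inner (jump \<T> p e x) (ne e)))"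
        unfolding edge_int_const edge_int_cmult rt_dof_def using ep by simp
      also have "\<dots> = edge_int e (\<lambda>x. - inner (avgflux \<T> \<beta> p e x) (outn T e) + (\<sigma> e / elen e) * inner (jump \<T> p e x) (outn T e))"
        unfolding sn[symmetric] by (simp add: algebra_simps)
      also have "\<dots> = edge_int e (\<lambda>x. - inner (avgflux \<T> \<beta> p e x) (outn T e)) + edge_int e (\<lambda>x. (\<sigma> e / elen e) * inner (jump \<T> p e x) (outn T e))"
      proof (rule edge_int_add)
        show "(\<lambda>t. - inner (avgflux \<T> \<beta> p e ((1 - t) *\<^sub>R ep1 e + t *\<^sub>R ep2 e)) (outn T e)) integrable_on {0..1}"
          using integrable_neg[OF integ(1)[OF em]] .
        show "(\<lambda>t. (\<sigma> e / elen e) * inner (jump \<T> p e ((1 - t) *\<^sub>R ep1 e + t *\<^sub>R ep2 e)) (outn T e)) integrable_on {0..1}"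
          using integrable_on_cmult_left[OF integ(2)[OF em], of "\<sigma> e / elen e"] unfolding of_real_eq_id id_def .
      qed
      also have "\<dots> = - F e + Pn e" unfolding F_def Pn_def edge_int_neg edge_int_cmult ..
      finally show ?thesis .
    qed
    have "(\<Sum>e\<in>edges_of T. edge_int e (\<lambda>x. inner (u T x) (outn T e))) = (\<Sum>e\<in>edges_of T. - F e + Pn e)"
      using lhs by simp
    also have "\<dots> = - (\<Sum>e\<in>edges_of T. F e) + (\<Sum>e\<in>edges_of T. Pn e)" by (simp add: sum.distrib sum_negf sum_subtractf)
    also have "\<dots> = (LINT x:convex hull T|lebesgue. f x)" using ah sch l2 by simp
    finally show ?thesis .
  qed
  define L where "L T e = edge_int e (\<lambda>x. inner (u T x) (outn T e))" for T e
  have swap: "(\<Sum>T\<in>\<T>. \<Sum>e\<in>edges_of T. L T e) = (\<Sum>e\<in>mesh_edges \<T>. \<Sum>T\<in>nbrs \<T> e. L T e)"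
  proof -
    have "(\<Sum>T\<in>\<T>. \<Sum>e\<in>edges_of T. L T e) = (\<Sum>T\<in>\<T>. \<Sum>e\<in>{e. e \<in> mesh_edges \<T> \<and> e \<subseteq> T}. L T e)"
      by (intro sum.cong refl) (auto simp: edges_eq nbrs_def)
    also have "\<dots> = (\<Sum>e\<in>mesh_edges \<T>. \<Sum>T\<in>{T. T \<in> \<T> \<and> e \<subseteq> T}. L T e)"
      by (rule sum.swap_restrict[OF fin finM])
    also have "\<dots> = (\<Sum>e\<in>mesh_edges \<T>. \<Sum>T\<in>nbrs \<T> e. L T e)" unfolding nbrs_def by simp
    finally show ?thesis .
  qed
  have int0: "(\<Sum>T\<in>nbrs \<T> e. L T e) = 0" if ei: "e \<in> int_edges \<T>" for e
  proof -
    obtain T1 T2 where T12: "nbrs \<T> e = {T1, T2}" "T1 \<noteq> T2" using ei unfolding int_edges_def by (auto simp: card_2_iff)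
    have em: "e \<in> mesh_edges \<T>" using ei ib by auto
    have "L T2 e = edge_int e (\<lambda>x. - inner (u T1 x) (outn T1 e))" unfolding L_def
    proof (rule edge_int_cong)
      fix t :: real assume t: "t \<in> {0..1}"
      have "\<forall>x\<in>convex hull e. inner (u T1 x) (outn T1 e) + inner (u T2 x) (outn T2 e) = 0"
        using uRT ei T12 unfolding RT0_def by blast
      then show "inner (u T2 ((1 - t) *\<^sub>R ep1 e + t *\<^sub>R ep2 e)) (outn T2 e) = - inner (u T1 ((1 - t) *\<^sub>R ep1 e + t *\<^sub>R ep2 e)) (outn T1 e)"
        using seg_hull[OF em t] by (simp add: add_eq_0_iff)
    qed
    then have "L T2 e = - L T1 e" unfolding L_def edge_int_neg .
    then show ?thesis using T12 by simp
  qed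
  have "(\<Sum>e\<in>bdry_edges \<T>. \<Sum>T\<in>nbrs \<T> e. L T e) = (\<Sum>e\<in>mesh_edges \<T>. \<Sum>T\<in>nbrs \<T> e. L T e)"
  proof -
    have "(\<Sum>e\<in>mesh_edges \<T>. \<Sum>T\<in>nbrs \<T> e. L T e) = (\<Sum>e\<in>int_edges \<T>. \<Sum>T\<in>nbrs \<T> e. L T e) + (\<Sum>e\<in>bdry_edges \<T>. \<Sum>T\<in>nbrs \<T> e. L T e)"
      unfolding ib(4) using finM ib by (intro sum.union_disjoint) (auto intro: finite_subset)
    then show ?thesis using int0 by simp
  qed
  also have "\<dots> = (\<Sum>T\<in>\<T>. \<Sum>e\<in>edges_of T. L T e)" using swap by simp
  also have "\<dots> = (\<Sum>T\<in>\<T>. LINT x:convex hull T|lebesgue. f x)" using local unfolding L_def by simp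
  also have "\<dots> = (LINT x:\<Omega>|lebesgue. f x)" by (rule sum_tri_integral[OF dom mesh f_L2])
  finally have glob: "(\<Sum>e\<in>bdry_edges \<T>. \<Sum>T\<in>nbrs \<T> e. L T e) = (LINT x:\<Omega>|lebesgue. f x)" .
  show ?thesis using local glob unfolding L_def by blast
qed

end
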